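(* Let $n\ge1$ and $p\in H_3(\mathbb{C}^n)$ be arbitrary. Then there exist: - an invertible linear change of variables $y_j=\sum_{k=1}^n\lambda_{jk}x_k$ ($1\le j\le n$); - $n$ linear forms $\ell_1,\dots,\ell_n\in H_1(\mathbb{C}^n)$; - a cubic form $q$ in the $n-1$ variables $y_2,\dots,y_n$, such that $$p(x_1,\dots,x_n) = \sum_{j=1}^n \ell_j^3(x_1,\dots,x_n) + q(y_2,\dots,y_n).$$ Consequently, every cubic form in $n$ variables over $\mathbb{C}$ is a sum of at most $\binom{n+1}{2}$ cubes of linear forms.
   Context: $H_d(\mathbb{C}^n)$ denotes the complex vector space of homogeneous polynomials of degree $d$ in $n$ variables. *)

theory Defs
  imports Complex_Main
begin

text \<open>Polynomials in variables x_0, ..., x_{n-1} over the complex numbers are represented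
  by their polynomial functions on points (nat \<Rightarrow> complex); only coordinates below n matter.\<close>

definition linear_form :: "nat \<Rightarrow> ((nat \<Rightarrow> complex) \<Rightarrow> complex) \<Rightarrow> bool" where
  "linear_form n l \<longleftrightarrow> (\<exists>a :: nat \<Rightarrow> complex. \<forall>x. l x = (\<Sum>k<n. a k * x k))"

definition cubic_form_on :: "nat set \<Rightarrow> ((nat \<Rightarrow> complex) \<Rightarrow> complex) \<Rightarrow> bool" where
  "cubic_form_on V q \<longleftrightarrow> (\<exists>c :: nat \<Rightarrow> nat \<Rightarrow> nat \<Rightarrow> complex.
      \<forall>x. q x = (\<Sum>i\<in>V. \<Sum>j\<in>V. \<Sum>k\<in>V. c i j k * x i * x j * x k))"

definition cubic_form :: "nat \<Rightarrow> ((nat \<Rightarrow> complex) \<Rightarrow> complex) \<Rightarrow> bool" where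
  "cubic_form n q \<longleftrightarrow> cubic_form_on {..<n} q"

end

theory Submission
  imports Defs
begin


lemma cube_root_ex: "\<exists>c::complex. c ^ 3 = z"
proof -
  have "(rcis (root 3 (cmod z)) (Arg z / 3)) ^ 3 = z"
    by (simp add: DeMoivre2 rcis_cmod_Arg)
  then show ?thesis by blast
qed

definition lf :: "nat set \<Rightarrow> (nat \<Rightarrow> complex) \<Rightarrow> (nat \<Rightarrow> complex) \<Rightarrow> complex" where
  "lf V a x = (\<Sum>k\<in>V. a k * x k)"
definition qf :: "nat set \<Rightarrow> (nat \<Rightarrow> nat \<Rightarrow> complex) \<Rightarrow> (nat \<Rightarrow> complex) \<Rightarrow> complex" where
  "qf V g x = (\<Sum>j\<in>V. \<Sum>k\<in>V. g j k * x j * x k)"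
definition cf :: "nat set \<Rightarrow> (nat \<Rightarrow> nat \<Rightarrow> nat \<Rightarrow> complex) \<Rightarrow> (nat \<Rightarrow> complex) \<Rightarrow> complex" where
  "cf V c x = (\<Sum>i\<in>V. \<Sum>j\<in>V. \<Sum>k\<in>V. c i j k * x i * x j * x k)"

definition sh :: "(nat \<Rightarrow> complex) \<Rightarrow> complex \<Rightarrow> (nat \<Rightarrow> complex) \<Rightarrow> nat \<Rightarrow> complex" where
  "sh x t v = (\<lambda>k. x k + t * v k)"

lemma lf_sh: "lf V a (sh x t v) = lf V a x + t * lf V a v"
  by (simp add: lf_def sh_def sum.distrib sum_distrib_left algebra_simps)

lemma linear_form_lf: "linear_form n l \<longleftrightarrow> (\<exists>a. \<forall>x. l x = lf {..<n} a x)"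
  by (simp add: linear_form_def lf_def)

lemma linear_form_sh: "linear_form n l \<Longrightarrow> l (sh x t v) = l x + t * l v"
  by (auto simp: linear_form_lf lf_sh)

lemma linear_form_comb: "linear_form n f \<Longrightarrow> linear_form n g \<Longrightarrow> linear_form n (\<lambda>x. a * f x + b * g x)"
proof -
  assume "linear_form n f" "linear_form n g"
  then obtain u w where "\<forall>x. f x = lf {..<n} u x" "\<forall>x. g x = lf {..<n} w x" by (auto simp: linear_form_lf)
  then have "\<forall>x. a * f x + b * g x = lf {..<n} (\<lambda>k. a * u k + b * w k) x"
    by (simp add: lf_def sum.distrib sum_distrib_left algebra_simps)
  then show ?thesis by (auto simp: linear_form_lf)
qed

lemma linear_form_scale: "linear_form n f \<Longrightarrow> linear_form n (\<lambda>x. a * f x)"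
  using linear_form_comb[of n f f a 0] by simp

lemma qf_sh: "qf V g (sh x t v) = qf V g x + 2 * t * (lf V (\<lambda>k. \<Sum>j\<in>V. (g j k + g k j) * v j) x / 2) + t^2 * qf V g v"
proof -
  have e: "\<And>j k. g j k * sh x t v j * sh x t v k = g j k * x j * x k + t * (g j k * v j * x k) + t * (g j k * x j * v k) + t^2 * (g j k * v j * v k)"
    by (simp add: sh_def algebra_simps power2_eq_square)
  have "qf V g (sh x t v) = qf V g x + t * (\<Sum>j\<in>V. \<Sum>k\<in>V. g j k * v j * x k) + t * (\<Sum>j\<in>V. \<Sum>k\<in>V. g j k * x j * v k) + t^2 * qf V g v"
    unfolding qf_def e by (simp add: sum.distrib sum_distrib_left)
  moreover have "(\<Sum>j\<in>V. \<Sum>k\<in>V. g j k * x j * v k) = (\<Sum>k\<in>V. \<Sum>j\<in>V. g k j * v j * x k)"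
    by (simp add: mult_ac)
  moreover have "lf V (\<lambda>k. \<Sum>j\<in>V. (g j k + g k j) * v j) x = (\<Sum>j\<in>V. \<Sum>k\<in>V. g j k * v j * x k) + (\<Sum>k\<in>V. \<Sum>j\<in>V. g k j * v j * x k)"
    unfolding lf_def by (subst sum.swap) (simp add: sum.distrib sum_distrib_left sum_distrib_right algebra_simps)
  ultimately show ?thesis by (simp add: algebra_simps)
qed

lemma qf_remove:
  assumes "finite V" "r \<in> V" "z r = 0"
  shows "qf V g z = qf (V - {r}) g z"
proof -
  have A: "sum h V = sum h (V - {r})" if "h r = 0" for h :: "nat \<Rightarrow> complex"
    using sum.remove[OF assms(1,2), of h] that by simp
  have "qf V g z = (\<Sum>j\<in>V. \<Sum>k\<in>V-{r}. g j k * z j * z k)"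
    unfolding qf_def by (rule sum.cong[OF refl], rule A) (simp add: assms)
  also have "\<dots> = qf (V - {r}) g z" unfolding qf_def by (rule A) (simp add: assms)
  finally show ?thesis .
qed

lemma lf_remove:
  assumes "finite V" "r \<in> V"
  shows "lf V a z = a r * z r + lf (V - {r}) a z"
  using assms by (simp add: lf_def sum.remove)

lemma lf_cong: "(\<And>k. k \<in> V \<Longrightarrow> a k = b k) \<Longrightarrow> lf V a z = lf V b z"
  by (simp add: lf_def)

lemma hyper_diag:
  assumes fin: "finite V" and r: "r \<in> V" "w r \<noteq> 0"
    and inv: "\<forall>x t. qf V g (sh x t w) = qf V g x"
    and D: "\<forall>g'. \<exists>b. \<forall>z. qf (V - {r}) g' z = (\<Sum>t<card (V - {r}). (lf (V-{r}) (b t) z)^2)"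
  shows "\<exists>b. (\<forall>x. qf V g x = (\<Sum>t<card V - 1. (lf V (b t) x)^2)) \<and> (\<forall>t. lf V (b t) w = 0)"
proof -
  define W where "W = V - {r}"
  obtain b' where b': "\<And>z. qf W g z = (\<Sum>t<card W. (lf W (b' t) z)^2)" using D W_def by blast
  define y where "y x = sh x (- x r / w r) w" for x
  have yr: "y x r = 0" for x using r by (simp add: y_def sh_def)
  define \<beta> where "\<beta> t k = (if k = r then - lf W (b' t) w / w r else b' t k)" for t k
  have lb: "lf V (\<beta> t) x = lf W (b' t) (y x)" for t x
  proof -
    have "lf V (\<beta> t) x = \<beta> t r * x r + lf W (\<beta> t) x" unfolding W_def by (rule lf_remove[OF fin r(1)])
    also have "lf W (\<beta> t) x = lf W (b' t) x" by (rule lf_cong) (simp add: \<beta>_def W_def)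
    moreover have "\<beta> t r = - lf W (b' t) w / w r" by (simp add: \<beta>_def)
    ultimately show ?thesis unfolding y_def lf_sh by (simp add: algebra_simps)
  qed
  have cW: "card W = card V - 1" using fin r by (simp add: W_def)
  show ?thesis
  proof (intro exI conjI allI)
    fix x
    have "qf V g x = qf V g (y x)" using inv y_def by simp
    also have "\<dots> = qf W g (y x)" unfolding W_def by (rule qf_remove[where z="y x", OF fin r(1) yr])
    also have "\<dots> = (\<Sum>t<card V - 1. (lf V (\<beta> t) x)^2)" by (simp add: b' lb cW)
    finally show "qf V g x = (\<Sum>t<card V - 1. (lf V (\<beta> t) x)^2)" .
  next
    fix t
    have "y w = sh w (-1) w" using r by (simp add: y_def)
    then show "lf V (\<beta> t) w = 0" by (simp add: lb lf_sh)
  qed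
qed

lemma qf_zero[simp]: "qf V g (\<lambda>k. 0) = 0" by (simp add: qf_def)

lemma lf_sq: "(lf V a x)^2 = (\<Sum>j\<in>V. \<Sum>k\<in>V. a j * a k * x j * x k)"
  by (simp add: lf_def power2_eq_square sum_product mult_ac)

lemma diag: "finite V \<Longrightarrow> \<exists>b. \<forall>x. qf V g x = (\<Sum>t<card V. (lf V (b t) x)^2)"
proof (induction "card V" arbitrary: V g rule: less_induct)
  case less
  show ?case
  proof (cases "\<forall>x. qf V g x = 0")
    case True
    then show ?thesis by (intro exI[of _ "\<lambda>_ _. 0"]) (simp add: lf_def)
  next
    case False
    then obtain w where gw: "qf V g w \<noteq> 0" by blast
    define \<gamma> where "\<gamma> = qf V g w"
    have g0: "\<gamma> \<noteq> 0" using gw \<gamma>_def by simp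
    obtain r where r: "r \<in> V" "w r \<noteq> 0"
    proof -
      have "\<exists>r\<in>V. w r \<noteq> 0"
      proof (rule ccontr)
        assume "\<not> (\<exists>r\<in>V. w r \<noteq> 0)"
        then have "qf V g w = 0" by (simp add: qf_def)
        then show False using gw by simp
      qed
      then show ?thesis using that by blast
    qed
    define \<eta> where "\<eta> = (\<lambda>k. \<Sum>j\<in>V. (g j k + g k j) * w j)"
    define H where "H x = lf V \<eta> x / 2" for x
    have qsh: "qf V g (sh x t w) = qf V g x + 2 * t * H x + t^2 * \<gamma>" for x t
      using qf_sh[of V g x t w] by (simp add: H_def \<eta>_def \<gamma>_def)
    have Hsh: "H (sh x t w) = H x + t * \<gamma>" for x t
    proof -
      have "H (sh x t w) = H x + t * H w" by (simp add: H_def lf_sh field_simps)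
      moreover have "H w = \<gamma>"
      proof -
        have "sh w (-1) w = (\<lambda>k. 0)" by (simp add: sh_def fun_eq_iff)
        then have "0 = \<gamma> - 2 * H w + \<gamma>" using qsh[of w "-1"] by (simp add: \<gamma>_def)
        then show ?thesis by simp
      qed
      ultimately show ?thesis by simp
    qed
    define g' where "g' j k = g j k - \<eta> j * \<eta> k / (4 * \<gamma>)" for j k
    have qg': "qf V g' x = qf V g x - (H x)^2 / \<gamma>" for x
    proof -
      have "(H x)^2 = (lf V \<eta> x)^2 / 4" by (simp add: H_def power_divide)
      then have "(H x)^2 / \<gamma> = (\<Sum>j\<in>V. \<Sum>k\<in>V. \<eta> j * \<eta> k / (4 * \<gamma>) * x j * x k)"
        by (simp add: lf_sq sum_divide_distrib)
      then show ?thesis by (simp add: qf_def g'_def sum_subtractf algebra_simps)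
    qed
    have inv: "\<forall>x t. qf V g' (sh x t w) = qf V g' x"
    proof (intro allI)
      fix x t
      show "qf V g' (sh x t w) = qf V g' x"
        unfolding qg' qsh Hsh using g0 by (simp add: field_simps power2_eq_square)
    qed
    have D: "\<forall>g''. \<exists>b. \<forall>z. qf (V - {r}) g'' z = (\<Sum>t<card (V - {r}). (lf (V-{r}) (b t) z)^2)"
    proof
      fix g''
      have "card V > 0" using less.prems r by (auto simp: card_gt_0_iff)
      then have "card (V - {r}) < card V" using less.prems r by simp
      then show "\<exists>b. \<forall>z. qf (V - {r}) g'' z = (\<Sum>t<card (V - {r}). (lf (V-{r}) (b t) z)^2)"
        using less.hyps less.prems by blast
    qed
    obtain \<beta> where \<beta>: "\<And>x. qf V g' x = (\<Sum>t<card V - 1. (lf V (\<beta> t) x)^2)"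
      using hyper_diag[OF less.prems r inv D] by blast
    define c where "c = csqrt \<gamma>"
    have c0: "c \<noteq> 0" using g0 c_def by auto
    define b where "b t = (if t = 0 then (\<lambda>k. \<eta> k / (2 * c)) else \<beta> (t - 1))" for t
    have "card V > 0" using less.prems r by (auto simp: card_gt_0_iff)
    then have cV: "card V = Suc (card V - 1)" by simp
    show ?thesis
    proof (intro exI allI)
      fix x
      have "(lf V (b 0) x)^2 = (H x)^2 / \<gamma>"
      proof -
        have "lf V (b 0) x = lf V \<eta> x / (2 * c)" by (simp add: b_def lf_def sum_divide_distrib)
        then have "(lf V (b 0) x)^2 = (lf V \<eta> x)^2 / (4 * c^2)" by (simp add: power_divide power_mult_distrib)
        also have "c^2 = \<gamma>" by (simp add: c_def)
        finally show ?thesis by (simp add: H_def power_divide)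
      qed
      then have "qf V g x = (lf V (b 0) x)^2 + qf V g' x" using qg'[of x] by simp
      also have "\<dots> = (\<Sum>t<card V. (lf V (b t) x)^2)"
        by (subst cV, subst sum.lessThan_Suc_shift) (simp add: \<beta> b_def)
      finally show "qf V g x = (\<Sum>t<card V. (lf V (b t) x)^2)" .
    qed
  qed
qed

lemma pairing:
  assumes "linear_form n h" "\<forall>i<k. linear_form n (m i)" "\<forall>i<k. m i v = 0" "h v \<noteq> 0" "w \<noteq> 0"
  shows "\<exists>L. (\<forall>j<Suc k. linear_form n (L j)) \<and>
     (\<forall>x. (\<Sum>j<Suc k. L j v * (L j x)^2) = w * (h x)^2 + (\<Sum>i<k. (m i x)^2))"
  using assms
proof (induction k arbitrary: h w)
  case 0
  obtain c where c: "c ^ 3 = w / h v" using cube_root_ex by blast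
  show ?case
  proof (intro exI[of _ "\<lambda>j x. c * h x"] conjI allI impI)
    show "linear_form n (\<lambda>x. c * h x)" for j using linear_form_scale[OF 0(1)] .
    fix x
    have "c * h v * (c * h x)^2 = c^3 * h v * (h x)^2" by (simp add: power2_eq_square power3_eq_cube)
    then show "(\<Sum>j<Suc 0. c * h v * (c * h x)\<^sup>2) = w * (h x)\<^sup>2 + (\<Sum>i<0. (m i x)\<^sup>2)"
      using c 0(4) by simp
  qed
next
  case (Suc k)
  define s where "s = 1 / csqrt w"
  have ws: "w * s^2 = 1" using Suc.prems(5) by (simp add: s_def power_divide)
  define h' where "h' x = h x - s * m k x" for x
  have lh': "linear_form n h'" unfolding h'_def
    using linear_form_comb[OF Suc.prems(1) Suc.prems(2)[rule_format, of k], of 1 "-s"] by simp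
  have h'v: "h' v = h v" using Suc.prems(3) by (simp add: h'_def)
  obtain L' where L': "\<forall>j<Suc k. linear_form n (L' j)"
    "\<forall>x. (\<Sum>j<Suc k. L' j v * (L' j x)^2) = w/2 * (h' x)^2 + (\<Sum>i<k. (m i x)^2)"
  proof -
    have "\<forall>i<k. linear_form n (m i)" "\<forall>i<k. m i v = 0" "h' v \<noteq> 0" "w/2 \<noteq> 0"
      using Suc.prems h'v by auto
    from Suc.IH[OF lh' this] show ?thesis using that by blast
  qed
  obtain c where c: "c ^ 3 = (w/2) / h v" using cube_root_ex by blast
  define hh where "hh x = c * (h x + s * m k x)" for x
  have lhh: "linear_form n hh" unfolding hh_def
    using linear_form_scale[OF linear_form_comb[OF Suc.prems(1) Suc.prems(2)[rule_format, of k], of 1 s]] by simp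
  define L where "L j = (if j = Suc k then hh else L' j)" for j
  show ?case
  proof (intro exI[of _ L] conjI allI impI)
    show "linear_form n (L j)" if "j < Suc (Suc k)" for j
      using that L' lhh by (auto simp: L_def less_Suc_eq)
    fix x
    have "(\<Sum>j<Suc (Suc k). L j v * (L j x)^2) = (\<Sum>j<Suc k. L' j v * (L' j x)^2) + hh v * (hh x)^2"
      by (simp add: L_def)
    also have "hh v * (hh x)^2 = c^3 * h v * (h x + s * m k x)^2"
      using Suc.prems(3) by (simp add: hh_def power2_eq_square power3_eq_cube)
    also have "\<dots> = w/2 * (h x + s * m k x)^2" using c Suc.prems(4) by simp
    finally have e: "(\<Sum>j<Suc (Suc k). L j v * (L j x)^2) = (\<Sum>j<Suc k. L' j v * (L' j x)^2) + w/2 * (h x + s * m k x)^2" .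
    have "w/2 * (h' x)^2 + w/2 * (h x + s * m k x)^2 = w * (h x)^2 + (w * s^2) * (m k x)^2"
      by (simp add: h'_def power2_eq_square algebra_simps)
    then show "(\<Sum>j<Suc (Suc k). L j v * (L j x)^2) = w * (h x)^2 + (\<Sum>i<Suc k. (m i x)^2)"
      unfolding e L'(2)[rule_format] ws by simp
  qed
qed

lemma swap3a: "(\<Sum>i\<in>A. \<Sum>j\<in>B. \<Sum>k\<in>C. f i j k) = (\<Sum>j\<in>B. \<Sum>k\<in>C. \<Sum>i\<in>A. (f i j k :: complex))"
  by (rule trans[OF sum.swap], rule sum.cong[OF refl], rule sum.swap)
lemma swap3b: "(\<Sum>i\<in>A. \<Sum>j\<in>B. \<Sum>k\<in>C. f i j k) = (\<Sum>i\<in>A. \<Sum>k\<in>C. \<Sum>j\<in>B. (f i j k :: complex))"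
  by (rule sum.cong[OF refl], rule sum.swap)
lemma swap3c: "(\<Sum>i\<in>A. \<Sum>j\<in>B. \<Sum>k\<in>C. f i j k) = (\<Sum>k\<in>C. \<Sum>i\<in>A. \<Sum>j\<in>B. (f i j k :: complex))"
  by (rule trans[OF swap3b], rule sum.swap)

definition cA1 :: "nat set \<Rightarrow> (nat \<Rightarrow> nat \<Rightarrow> nat \<Rightarrow> complex) \<Rightarrow> (nat \<Rightarrow> complex) \<Rightarrow> (nat \<Rightarrow> complex) \<Rightarrow> complex" where
  "cA1 V c v x = (\<Sum>i\<in>V. \<Sum>j\<in>V. \<Sum>k\<in>V. c i j k * (v i * x j * x k + x i * v j * x k + x i * x j * v k))"
definition cA2 :: "nat set \<Rightarrow> (nat \<Rightarrow> nat \<Rightarrow> nat \<Rightarrow> complex) \<Rightarrow> (nat \<Rightarrow> complex) \<Rightarrow> (nat \<Rightarrow> complex) \<Rightarrow> complex" where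
  "cA2 V c v x = (\<Sum>i\<in>V. \<Sum>j\<in>V. \<Sum>k\<in>V. c i j k * (v i * v j * x k + v i * x j * v k + x i * v j * v k))"

lemma cf_sh: "cf V c (sh x t v) = cf V c x + t * cA1 V c v x + t^2 * cA2 V c v x + t^3 * cf V c v"
proof -
  have e: "\<And>i j k. c i j k * sh x t v i * sh x t v j * sh x t v k =
     c i j k * x i * x j * x k + t * (c i j k * (v i * x j * x k + x i * v j * x k + x i * x j * v k))
     + t^2 * (c i j k * (v i * v j * x k + v i * x j * v k + x i * v j * v k)) + t^3 * (c i j k * v i * v j * v k)"
    by (simp add: sh_def algebra_simps power2_eq_square power3_eq_cube)
  show ?thesis unfolding cf_def cA1_def cA2_def e by (simp add: sum.distrib sum_distrib_left)
qed

lemma cf_scale: "cf V c (\<lambda>k. a * x k) = a^3 * cf V c x"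
  unfolding cf_def by (simp add: sum_distrib_left power3_eq_cube mult_ac)

lemma cA1_qf: "\<exists>g. \<forall>x. cA1 V c v x = qf V g x"
proof -
  define g where "g j k = (\<Sum>i\<in>V. (c i j k + c j i k + c j k i) * v i)" for j k
  have "cA1 V c v x = qf V g x" for x
  proof -
    have s1: "(\<Sum>i\<in>V. \<Sum>j\<in>V. \<Sum>k\<in>V. c i j k * (v i * x j * x k)) = (\<Sum>j\<in>V. \<Sum>k\<in>V. (\<Sum>i\<in>V. c i j k * v i) * x j * x k)"
      by (subst swap3a) (simp add: sum_distrib_left sum_distrib_right mult_ac)
    have s2: "(\<Sum>i\<in>V. \<Sum>j\<in>V. \<Sum>k\<in>V. c i j k * (x i * v j * x k)) = (\<Sum>j\<in>V. \<Sum>k\<in>V. (\<Sum>i\<in>V. c j i k * v i) * x j * x k)"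
      by (subst swap3b) (simp add: sum_distrib_left sum_distrib_right mult_ac)
    have s3: "(\<Sum>i\<in>V. \<Sum>j\<in>V. \<Sum>k\<in>V. c i j k * (x i * x j * v k)) = (\<Sum>j\<in>V. \<Sum>k\<in>V. (\<Sum>i\<in>V. c j k i * v i) * x j * x k)"
      by (simp add: sum_distrib_right sum_distrib_left mult_ac)
    have "cA1 V c v x = (\<Sum>i\<in>V. \<Sum>j\<in>V. \<Sum>k\<in>V. c i j k * (v i * x j * x k)) + (\<Sum>i\<in>V. \<Sum>j\<in>V. \<Sum>k\<in>V. c i j k * (x i * v j * x k))
      + (\<Sum>i\<in>V. \<Sum>j\<in>V. \<Sum>k\<in>V. c i j k * (x i * x j * v k))"
      unfolding cA1_def by (simp only: distrib_left sum.distrib)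
    also have "\<dots> = qf V g x" unfolding s1 s2 s3 qf_def g_def
      by (simp only: distrib_right sum.distrib)
    finally show ?thesis .
  qed
  then show ?thesis by blast
qed

lemma cA2_lf: "\<exists>a. \<forall>x. cA2 V c v x = lf V a x"
proof -
  define a where "a k = (\<Sum>i\<in>V. \<Sum>j\<in>V. (c i j k + c i k j + c k i j) * v i * v j)" for k
  have "cA2 V c v x = lf V a x" for x
  proof -
    have s1: "(\<Sum>i\<in>V. \<Sum>j\<in>V. \<Sum>k\<in>V. c i j k * (v i * v j * x k)) = (\<Sum>k\<in>V. (\<Sum>i\<in>V. \<Sum>j\<in>V. c i j k * v i * v j) * x k)"
      by (subst swap3c) (simp add: sum_distrib_left sum_distrib_right mult_ac)
    have s2: "(\<Sum>i\<in>V. \<Sum>j\<in>V. \<Sum>k\<in>V. c i j k * (v i * x j * v k)) = (\<Sum>k\<in>V. (\<Sum>i\<in>V. \<Sum>j\<in>V. c i k j * v i * v j) * x k)"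
      by (subst sum.swap) (simp add: sum_distrib_left sum_distrib_right mult_ac)
    have s3: "(\<Sum>i\<in>V. \<Sum>j\<in>V. \<Sum>k\<in>V. c i j k * (x i * v j * v k)) = (\<Sum>k\<in>V. (\<Sum>i\<in>V. \<Sum>j\<in>V. c k i j * v i * v j) * x k)"
      by (simp add: sum_distrib_right sum_distrib_left mult_ac)
    have "cA2 V c v x = (\<Sum>i\<in>V. \<Sum>j\<in>V. \<Sum>k\<in>V. c i j k * (v i * v j * x k)) + (\<Sum>i\<in>V. \<Sum>j\<in>V. \<Sum>k\<in>V. c i j k * (v i * x j * v k))
      + (\<Sum>i\<in>V. \<Sum>j\<in>V. \<Sum>k\<in>V. c i j k * (x i * v j * v k))"
      unfolding cA2_def by (simp only: distrib_left sum.distrib)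
    also have "\<dots> = lf V a x" unfolding s1 s2 s3 lf_def a_def
      by (simp only: distrib_right sum.distrib)
    finally show ?thesis .
  qed
  then show ?thesis by blast
qed

lemma cf_diff: "cf V c1 x - cf V c2 x = cf V (\<lambda>i j k. c1 i j k - c2 i j k) x"
  unfolding cf_def by (simp add: sum_subtractf algebra_simps)

lemma cf_add: "cf V c1 x + cf V c2 x = cf V (\<lambda>i j k. c1 i j k + c2 i j k) x"
  unfolding cf_def by (simp add: sum.distrib algebra_simps)

lemma cf_sum: "(\<Sum>l<(m::nat). cf V (C l) x) = cf V (\<lambda>i j k. \<Sum>l<m. C l i j k) x"
proof (induction m)
  case 0 then show ?case by (simp add: cf_def)
next
  case (Suc m) then show ?case by (simp add: cf_add)
qed

lemma lf_cube: "(lf V a x)^3 = cf V (\<lambda>i j k. a i * a j * a k) x"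
  unfolding cf_def lf_def by (simp add: power3_eq_cube sum_product sum_distrib_left sum_distrib_right mult_ac)

lemma cf_remove:
  assumes "finite V" "r \<in> V" "z r = 0"
  shows "cf V c z = cf (V - {r}) c z"
proof -
  have A: "sum h V = sum h (V - {r})" if "h r = 0" for h :: "nat \<Rightarrow> complex"
    using sum.remove[OF assms(1,2), of h] that by simp
  have "cf V c z = (\<Sum>i\<in>V. \<Sum>j\<in>V. \<Sum>k\<in>V-{r}. c i j k * z i * z j * z k)"
    unfolding cf_def by (intro sum.cong[OF refl] A) (simp add: assms)
  also have "\<dots> = (\<Sum>i\<in>V. \<Sum>j\<in>V-{r}. \<Sum>k\<in>V-{r}. c i j k * z i * z j * z k)"
    by (intro sum.cong[OF refl] A) (simp add: assms)
  also have "\<dots> = cf (V - {r}) c z" unfolding cf_def by (rule A) (simp add: assms)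
  finally show ?thesis .
qed

lemma cf_cong: "(\<And>k. k \<in> V \<Longrightarrow> z k = z' k) \<Longrightarrow> cf V c z = cf V c z'"
  unfolding cf_def by simp

lemma cf_reindex:
  assumes "inj_on \<tau> U" "\<And>a. a \<in> U \<Longrightarrow> \<sigma> (\<tau> a) = a"
  shows "cf (\<tau> ` U) c (\<lambda>j. z (\<sigma> j)) = cf U (\<lambda>a b d. c (\<tau> a) (\<tau> b) (\<tau> d)) z"
  unfolding cf_def using assms by (simp add: sum.reindex)

definition tau :: "nat \<Rightarrow> nat \<Rightarrow> nat" where
  "tau r i = (if i = 0 then r else if i = r then 0 else i)"

lemma tau_tau[simp]: "tau r (tau r i) = i" by (simp add: tau_def)
lemma tau_lt: "r < n \<Longrightarrow> i < n \<Longrightarrow> tau r i < n" by (simp add: tau_def)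
lemma tau_0: "tau r i = 0 \<longleftrightarrow> i = r" by (auto simp: tau_def)
lemma tau_image: "r < n \<Longrightarrow> tau r ` {1..<n} = {..<n} - {r}"
proof
  assume r: "r < n"
  show "tau r ` {1..<n} \<subseteq> {..<n} - {r}" using r by (auto simp: tau_def)
  show "{..<n} - {r} \<subseteq> tau r ` {1..<n}"
  proof
    fix j assume j: "j \<in> {..<n} - {r}"
    then have "tau r j \<in> {1..<n}" using r by (auto simp: tau_def)
    moreover have "j = tau r (tau r j)" by simp
    ultimately show "j \<in> tau r ` {1..<n}" by blast
  qed
qed
lemma tau_inj: "inj_on (tau r) U"
  by (metis inj_on_inverseI tau_tau)

definition Lam :: "(nat \<Rightarrow> complex) \<Rightarrow> nat \<Rightarrow> nat \<Rightarrow> nat \<Rightarrow> complex" where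
  "Lam v r j k = (if j = 0 then (if k = r then 1 / v r else 0)
     else (if k = tau r j then 1 else 0) - (if k = r then v (tau r j) / v r else 0))"
definition Mm :: "(nat \<Rightarrow> complex) \<Rightarrow> nat \<Rightarrow> nat \<Rightarrow> nat \<Rightarrow> complex" where
  "Mm v r j k = (if k = 0 then v j else if j = tau r k then 1 else 0)"

lemma Lam_apply:
  assumes "r < n" "j < n"
  shows "(\<Sum>k<n. Lam v r j k * u k) = (if j = 0 then u r / v r else u (tau r j) - v (tau r j) * u r / v r)"
proof (cases "j = 0")
  case True
  have "(\<Sum>k<n. Lam v r j k * u k) = (\<Sum>k<n. if k = r then u k / v r else 0)"
    by (rule sum.cong) (auto simp: Lam_def True)
  then show ?thesis using assms True by simp
next
  case False
  have "(\<Sum>k<n. Lam v r j k * u k) = (\<Sum>k<n. (if k = tau r j then u k else 0) - (if k = r then v (tau r j) * u k / v r else 0))"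
    by (rule sum.cong) (auto simp: Lam_def False)
  then show ?thesis using assms False tau_lt[OF assms] by (simp add: sum_subtractf)
qed

lemma Mm_apply:
  assumes "r < n" "j < n"
  shows "(\<Sum>k<n. Mm v r j k * u k) = v j * u 0 + (if j = r then 0 else u (tau r j))"
proof -
  have "(\<Sum>k<n. Mm v r j k * u k) = (\<Sum>k<n. (if k = 0 then v j * u k else 0) + (if k = tau r j \<and> j \<noteq> r then u k else 0))"
    by (rule sum.cong) (auto simp: Mm_def tau_def)
  also have "\<dots> = (\<Sum>k<n. (if k = 0 then v j * u k else 0)) + (\<Sum>k<n. (if k = tau r j \<and> j \<noteq> r then u k else 0))"
    by (rule sum.distrib)
  also have "(\<Sum>k<n. (if k = tau r j \<and> j \<noteq> r then u k else 0)) = (if j = r then 0 else u (tau r j))"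
    using tau_lt[OF assms] by (cases "j = r") auto
  finally show ?thesis using assms by simp
qed

lemma Lam_Mm:
  assumes "r < n" "v r \<noteq> 0" "j < n" "i < n"
  shows "(\<Sum>k<n. Lam v r j k * Mm v r k i) = (if j = i then 1 else 0)"
  using assms unfolding Lam_apply[OF assms(1,3)]
  by (auto simp: Mm_def tau_def)

lemma Mm_Lam:
  assumes "r < n" "v r \<noteq> 0" "j < n" "i < n"
  shows "(\<Sum>k<n. Mm v r j k * Lam v r k i) = (if j = i then 1 else 0)"
  using assms unfolding Mm_apply[OF assms(1,3)]
  by (auto simp: Lam_def tau_def)

lemma extract3:
  fixes a g h p s G' H' :: complex
  assumes E1: "a + 3*(s+1)*g + 3*(s+1)^2*h + (s+1)^3*p = (a + 3*s*g + 3*s^2*h + s^3*p) + 3*G' + 3*H' + p"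
    and E2: "a + 3*(s-1)*g + 3*(s-1)^2*h + (s-1)^3*p = (a + 3*s*g + 3*s^2*h + s^3*p) - 3*G' + 3*H' - p"
  shows "G' = g + 2*s*h + s^2*p" "H' = h + s*p"
proof -
  have e1: "3*G' + 3*H' = 3*g + 3*(2*s+1)*h + (3*s^2+3*s)*p"
    using E1 by (simp add: algebra_simps power2_eq_square power3_eq_cube)
  have e2: "3*H' - 3*G' = -3*g + 3*(1-2*s)*h + (3*s-3*s^2)*p"
    using E2 by (simp add: algebra_simps power2_eq_square power3_eq_cube)
  have "G' = ((3*G' + 3*H') - (3*H' - 3*G'))/6" by simp
  also have "\<dots> = g + 2*s*h + s^2*p" unfolding e1 e2 by (simp add: algebra_simps power2_eq_square)
  finally show "G' = g + 2*s*h + s^2*p" .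
  have "H' = ((3*G' + 3*H') + (3*H' - 3*G'))/6" by simp
  also have "\<dots> = h + s*p" unfolding e1 e2 by (simp add: algebra_simps power2_eq_square)
  finally show "H' = h + s*p" .
qed

lemma sh_sh: "sh (sh x s v) t v = sh x (s + t) v"
  by (simp add: sh_def fun_eq_iff algebra_simps)

lemma part1:
  fixes n :: nat and p :: "(nat \<Rightarrow> complex) \<Rightarrow> complex"
  assumes n1: "n \<ge> 1" and cp: "cubic_form n p"
  shows "\<exists>(\<Lambda> :: nat \<Rightarrow> nat \<Rightarrow> complex) (M :: nat \<Rightarrow> nat \<Rightarrow> complex).
            (\<forall>j<n. \<forall>i<n. (\<Sum>k<n. \<Lambda> j k * M k i) = (if j = i then 1 else 0)) \<and>
            (\<forall>j<n. \<forall>i<n. (\<Sum>k<n. M j k * \<Lambda> k i) = (if j = i then 1 else 0)) \<and>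
            (\<exists>(L :: nat \<Rightarrow> (nat \<Rightarrow> complex) \<Rightarrow> complex) q.
               (\<forall>j<n. linear_form n (L j)) \<and> cubic_form_on {1..<n} q \<and>
               (\<forall>x. p x = (\<Sum>j<n. (L j x) ^ 3) + q (\<lambda>j. \<Sum>k<n. \<Lambda> j k * x k)))"
proof (cases "\<forall>x. p x = 0")
  case True
  define I where "I = (\<lambda>j k::nat. if j = k then (1::complex) else 0)"
  have lf0: "linear_form n (\<lambda>x. 0)" unfolding linear_form_def by (intro exI[of _ "\<lambda>_. 0"]) simp
  have cf0: "cubic_form_on {1..<n} (\<lambda>y. 0)" unfolding cubic_form_on_def by (intro exI[of _ "\<lambda>_ _ _. 0"]) simp
  have "\<forall>j<n. \<forall>i<n. (\<Sum>k<n. I j k * I k i) = (if j = i then 1 else 0)"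
  proof (intro allI impI)
    fix j i assume "j < n" "i < n"
    have "(\<Sum>k<n. I j k * I k i) = (\<Sum>k<n. if k = j then (if j = i then 1 else 0) else 0)"
      by (rule sum.cong) (auto simp: I_def)
    then show "(\<Sum>k<n. I j k * I k i) = (if j = i then 1 else 0)" using \<open>j < n\<close> by simp
  qed
  then show ?thesis using True lf0 cf0
    by (intro exI[of _ I] exI[of _ I] conjI exI[of _ "\<lambda>j x. 0"] exI[of _ "\<lambda>y. 0"]) auto
next
  case False
  then obtain v where pv0: "p v \<noteq> 0" by blast
  define N where "N = {..<n}"
  have finN: "finite N" by (simp add: N_def)
  obtain c where pc: "\<And>x. p x = cf N c x"
    using cp unfolding cubic_form_def cubic_form_on_def cf_def N_def by blast
  define \<gamma> where "\<gamma> = p v"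
  have g0: "\<gamma> \<noteq> 0" using pv0 \<gamma>_def by simp
  obtain g where gG: "\<And>x. cA1 N c v x = qf N g x" using cA1_qf by blast
  obtain a where aH: "\<And>x. cA2 N c v x = lf N a x" using cA2_lf by blast
  define G where "G x = cA1 N c v x / 3" for x
  define H where "H x = cA2 N c v x / 3" for x
  have E: "p (sh x t v) = p x + 3*t*G x + 3*t^2*H x + t^3 * \<gamma>" for x t
    unfolding pc \<gamma>_def G_def H_def cf_sh by simp
  have Gv: "G v = \<gamma>" and Hv: "H v = \<gamma>"
  proof -
    have "sh v 1 v = (\<lambda>k. 2 * v k)" by (simp add: sh_def fun_eq_iff)
    then have "p (sh v 1 v) = 8 * \<gamma>" by (simp add: pc cf_scale \<gamma>_def)
    then have e1: "8 * \<gamma> = \<gamma> + 3 * G v + 3 * H v + \<gamma>" using E[of v 1] \<gamma>_def by simp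
    have "sh v (-1) v = (\<lambda>k. 0 * v k)" by (simp add: sh_def fun_eq_iff)
    then have "p (sh v (-1) v) = 0" by (simp only: pc cf_scale) simp
    then have e2: "0 = \<gamma> - 3 * G v + 3 * H v - \<gamma>" using E[of v "-1"] \<gamma>_def by simp
    have "G v = ((3 * G v + 3 * H v) - (3 * H v - 3 * G v)) / 6" by simp
    also have "\<dots> = \<gamma>" using e1 e2 by (simp add: algebra_simps)
    finally show "G v = \<gamma>" .
    have "H v = ((3 * G v + 3 * H v) + (3 * H v - 3 * G v)) / 6" by simp
    also have "\<dots> = \<gamma>" using e1 e2 by (simp add: algebra_simps)
    finally show "H v = \<gamma>" .
  qed
  have GH: "G (sh x s v) = G x + 2*s*H x + s^2*\<gamma> \<and> H (sh x s v) = H x + s*\<gamma>" for x s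
  proof -
    have E1: "p x + 3*(s+1)*G x + 3*(s+1)^2*H x + (s+1)^3*\<gamma> = (p x + 3*s*G x + 3*s^2*H x + s^3*\<gamma>) + 3*G (sh x s v) + 3*H (sh x s v) + \<gamma>"
      using E[of x "s+1"] E[of "sh x s v" 1] E[of x s] by (simp add: sh_sh)
    have E2: "p x + 3*(s-1)*G x + 3*(s-1)^2*H x + (s-1)^3*\<gamma> = (p x + 3*s*G x + 3*s^2*H x + s^3*\<gamma>) - 3*G (sh x s v) + 3*H (sh x s v) - \<gamma>"
      using E[of x "s-1"] E[of "sh x s v" "-1"] E[of x s] by (simp add: sh_sh)
    show ?thesis using extract3[OF E1 E2] by simp
  qed
  obtain r where r: "r < n" "v r \<noteq> 0"
  proof -
    have "\<exists>r<n. v r \<noteq> 0"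
    proof (rule ccontr)
      assume "\<not> (\<exists>r<n. v r \<noteq> 0)"
      then have "cf N c v = 0" by (simp add: cf_def N_def)
      then show False using pv0 pc by simp
    qed
    then show ?thesis using that by blast
  qed
  have rN: "r \<in> N" using r by (simp add: N_def)
  define \<eta> where "\<eta> k = a k / 3" for k
  have Hlf: "H x = lf N \<eta> x" for x by (simp add: H_def aH \<eta>_def lf_def sum_divide_distrib)
  define g1 where "g1 j k = g j k / 3 - \<eta> j * \<eta> k / \<gamma>" for j k
  have qg1: "qf N g1 x = G x - (H x)^2 / \<gamma>" for x
  proof -
    have "(H x)^2 / \<gamma> = (\<Sum>j\<in>N. \<Sum>k\<in>N. \<eta> j * \<eta> k / \<gamma> * x j * x k)"
      by (simp add: Hlf lf_sq sum_divide_distrib)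
    moreover have "G x = (\<Sum>j\<in>N. \<Sum>k\<in>N. g j k / 3 * x j * x k)"
      by (simp add: G_def gG qf_def sum_divide_distrib)
    ultimately show ?thesis by (simp add: qf_def g1_def sum_subtractf algebra_simps)
  qed
  have inv: "\<forall>x t. qf N g1 (sh x t v) = qf N g1 x"
  proof (intro allI)
    fix x t
    show "qf N g1 (sh x t v) = qf N g1 x"
      unfolding qg1 using GH[of x t] g0 by (simp add: field_simps power2_eq_square)
  qed
  have D: "\<forall>g'. \<exists>b. \<forall>z. qf (N - {r}) g' z = (\<Sum>t<card (N - {r}). (lf (N-{r}) (b t) z)^2)"
    using diag finN by blast
  obtain b where b1: "\<And>x. qf N g1 x = (\<Sum>t<card N - 1. (lf N (b t) x)^2)" and b2: "\<And>t. lf N (b t) v = 0"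
    using hyper_diag[OF finN rN r(2) inv D] by blast
  have cN: "card N - 1 = n - 1" by (simp add: N_def)
  have lH: "linear_form n H" unfolding linear_form_lf using Hlf N_def by blast
  have lm: "\<forall>i<n-1. linear_form n (\<lambda>x. lf N (b i) x)" unfolding linear_form_lf N_def by blast
  obtain L where L1: "\<forall>j<Suc (n-1). linear_form n (L j)"
    and L2: "\<forall>x. (\<Sum>j<Suc (n-1). L j v * (L j x)^2) = 1/\<gamma> * (H x)^2 + (\<Sum>i<n-1. (lf N (b i) x)^2)"
    using pairing[OF lH lm, of v "1/\<gamma>"] b2 Hv g0 by auto
  have sn: "Suc (n-1) = n" using n1 by simp
  have LL: "\<And>j. j < n \<Longrightarrow> linear_form n (L j)" using L1 sn by simp
  have LG: "(\<Sum>j<n. L j v * (L j x)^2) = G x" for x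
  proof -
    have "G x - (H x)^2/\<gamma> = (\<Sum>t<n-1. (lf N (b t) x)^2)" using b1[of x] qg1[of x] cN by simp
    then have "G x = (\<Sum>t<n-1. (lf N (b t) x)^2) + (H x)^2/\<gamma>" by (simp add: diff_eq_eq)
    then show ?thesis using L2[rule_format, of x] sn by simp
  qed
  have Lsh: "L j (sh x t v) = L j x + t * L j v" if "j < n" for j x t
    using linear_form_sh[OF LL[OF that]] .
  have expand2: "(\<Sum>j<n. L j v * (L j (sh x t v))^2) = (\<Sum>j<n. L j v * (L j x)^2) + 2*t*(\<Sum>j<n. (L j v)^2 * L j x) + t^2*(\<Sum>j<n. (L j v)^3)" for x t
  proof -
    have "(\<Sum>j<n. L j v * (L j (sh x t v))^2) = (\<Sum>j<n. L j v * (L j x)^2 + 2*t*((L j v)^2 * L j x) + t^2*((L j v)^3))"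
      by (rule sum.cong) (simp_all add: Lsh power2_eq_square power3_eq_cube algebra_simps)
    then show ?thesis by (simp add: sum.distrib sum_distrib_left)
  qed
  have SB: "(\<Sum>j<n. (L j v)^2 * L j x) = H x" and SC: "(\<Sum>j<n. (L j v)^3) = \<gamma>" for x
  proof -
    have e1: "G x + 2*H x + \<gamma> = G x + 2*(\<Sum>j<n. (L j v)^2 * L j x) + (\<Sum>j<n. (L j v)^3)"
      using expand2[of x 1] LG[of x] LG[of "sh x 1 v"] GH[of x 1] by simp
    have e2: "G x - 2*H x + \<gamma> = G x - 2*(\<Sum>j<n. (L j v)^2 * L j x) + (\<Sum>j<n. (L j v)^3)"
      using expand2[of x "-1"] LG[of x] LG[of "sh x (-1) v"] GH[of x "-1"] by simp
    define B where "B = (\<Sum>j<n. (L j v)^2 * L j x)"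
    define C where "C = (\<Sum>j<n. (L j v)^3)"
    have e1': "G x + 2*B + C = G x + 2*H x + \<gamma>" using e1 unfolding B_def C_def by (rule sym)
    have e2': "G x - 2*B + C = G x - 2*H x + \<gamma>" using e2 unfolding B_def C_def by (rule sym)
    have "B = ((G x + 2*B + C) - (G x - 2*B + C))/4" by simp
    also have "\<dots> = ((G x + 2*H x + \<gamma>) - (G x - 2*H x + \<gamma>))/4" by (simp only: e1' e2')
    also have "\<dots> = H x" by simp
    finally show "(\<Sum>j<n. (L j v)^2 * L j x) = H x" by (simp add: B_def)
    have "C = ((G x + 2*B + C) + (G x - 2*B + C))/2 - G x" by (simp add: field_simps)
    also have "\<dots> = ((G x + 2*H x + \<gamma>) + (G x - 2*H x + \<gamma>))/2 - G x" by (simp only: e1' e2')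
    also have "\<dots> = \<gamma>" by (simp add: field_simps)
    finally show "(\<Sum>j<n. (L j v)^3) = \<gamma>" by (simp add: C_def)
  qed
  have Rinv: "p (sh x t v) - (\<Sum>j<n. (L j (sh x t v))^3) = p x - (\<Sum>j<n. (L j x)^3)" for x t
  proof -
    have "(\<Sum>j<n. (L j (sh x t v))^3) = (\<Sum>j<n. (L j x)^3 + 3*t*(L j v * (L j x)^2) + 3*t^2*((L j v)^2 * L j x) + t^3*(L j v)^3)"
      by (rule sum.cong) (simp_all add: Lsh power2_eq_square power3_eq_cube algebra_simps)
    also have "\<dots> = (\<Sum>j<n. (L j x)^3) + 3*t*G x + 3*t^2*H x + t^3*\<gamma>"
      by (simp add: sum.distrib sum_distrib_left[symmetric] LG SB SC)
    finally show ?thesis using E[of x t] by simp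
  qed
  have "\<forall>j. \<exists>a. j < n \<longrightarrow> (\<forall>x. L j x = lf N a x)" using LL unfolding linear_form_lf N_def by blast
  then obtain A where A: "\<And>j x. j < n \<Longrightarrow> L j x = lf N (A j) x" by metis
  define cR where "cR i j k = c i j k - (\<Sum>l<n. A l i * A l j * A l k)" for i j k
  have Rcf: "p x - (\<Sum>j<n. (L j x)^3) = cf N cR x" for x
  proof -
    have "(\<Sum>j<n. (L j x)^3) = (\<Sum>j<n. cf N (\<lambda>i j' k. A j i * A j j' * A j k) x)"
      by (rule sum.cong) (simp_all add: A lf_cube)
    also have "\<dots> = cf N (\<lambda>i j' k. \<Sum>l<n. A l i * A l j' * A l k) x" by (rule cf_sum)
    finally show ?thesis unfolding pc cR_def by (simp add: cf_diff)
  qed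
  define W where "W = N - {r}"
  define y where "y x = sh x (- x r / v r) v" for x
  have yr: "y x r = 0" for x using r by (simp add: y_def sh_def)
  have Ry: "p x - (\<Sum>j<n. (L j x)^3) = cf W cR (y x)" for x
  proof -
    have "p x - (\<Sum>j<n. (L j x)^3) = p (y x) - (\<Sum>j<n. (L j (y x))^3)" unfolding y_def Rinv ..
    also have "\<dots> = cf N cR (y x)" by (rule Rcf)
    also have "\<dots> = cf W cR (y x)" unfolding W_def by (rule cf_remove[where z="y x", OF finN rN yr])
    finally show ?thesis .
  qed
  define q where "q z = cf W cR (\<lambda>j. z (tau r j))" for z
  have qL: "q (\<lambda>j. \<Sum>k<n. Lam v r j k * x k) = cf W cR (y x)" for x
    unfolding q_def
  proof (rule cf_cong)
    fix j assume j: "j \<in> W"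
    then have jn: "j < n" "j \<noteq> r" by (auto simp: W_def N_def)
    have "tau r j \<noteq> 0" using jn by (simp add: tau_0)
    then show "(\<Sum>k<n. Lam v r (tau r j) k * x k) = y x j"
      unfolding Lam_apply[OF r(1) tau_lt[OF r(1) jn(1)]] by (simp add: y_def sh_def algebra_simps)
  qed
  have cq: "cubic_form_on {1..<n} q"
  proof -
    have Wi: "W = tau r ` {1..<n}" using tau_image[OF r(1)] by (simp add: W_def N_def)
    have "q z = cf {1..<n} (\<lambda>a b d. cR (tau r a) (tau r b) (tau r d)) z" for z
      unfolding q_def Wi by (rule cf_reindex[OF tau_inj]) simp
    then show ?thesis unfolding cubic_form_on_def cf_def
      by (intro exI[of _ "\<lambda>a b d. cR (tau r a) (tau r b) (tau r d)"]) blast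
  qed
  have i1: "\<forall>j<n. \<forall>i<n. (\<Sum>k<n. Lam v r j k * Mm v r k i) = (if j = i then 1 else 0)"
    using Lam_Mm[where v=v, OF r] by blast
  have i2: "\<forall>j<n. \<forall>i<n. (\<Sum>k<n. Mm v r j k * Lam v r k i) = (if j = i then 1 else 0)"
    using Mm_Lam[where v=v, OF r] by blast
  have eqn: "\<forall>x. p x = (\<Sum>j<n. (L j x)^3) + q (\<lambda>j. \<Sum>k<n. Lam v r j k * x k)"
    unfolding qL using Ry by (simp add: algebra_simps)
  show ?thesis
    apply (rule exI[of _ "Lam v r"], rule exI[of _ "Mm v r"])
    using i1 i2 LL cq eqn by blast
qed

lemma sum_split_add: "(\<Sum>i<a + (m::nat). f i) = (\<Sum>i<a. f i) + (\<Sum>i<m. f (a + i))"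
  by (induction m) (simp_all add: algebra_simps)

lemma linear_form_comp:
  assumes "linear_form n f"
  shows "linear_form N (\<lambda>x. f (\<lambda>k. \<Sum>l<N. B k l * x l))"
proof -
  obtain a where a: "\<And>x. f x = (\<Sum>k<n. a k * x k)" using assms unfolding linear_form_def by blast
  have "f (\<lambda>k. \<Sum>l<N. B k l * x l) = (\<Sum>l<N. (\<Sum>k<n. a k * B k l) * x l)" for x
    unfolding a by (simp add: sum_distrib_left sum_distrib_right mult_ac sum.swap[of _ "{..<n}"])
  then show ?thesis unfolding linear_form_def by (intro exI[of _ "\<lambda>l. \<Sum>k<n. a k * B k l"]) blast
qed

lemma part2:
  fixes n :: nat and p :: "(nat \<Rightarrow> complex) \<Rightarrow> complex"
  assumes "cubic_form n p"
  shows "\<exists>m (L :: nat \<Rightarrow> (nat \<Rightarrow> complex) \<Rightarrow> complex).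
            m \<le> (n + 1) choose 2 \<and> (\<forall>i<m. linear_form n (L i)) \<and>
            (\<forall>x. p x = (\<Sum>i<m. (L i x) ^ 3))"
  using assms
proof (induction n arbitrary: p)
  case 0
  then have "\<forall>x. p x = 0" by (simp add: cubic_form_def cubic_form_on_def)
  then show ?case by (intro exI[of _ 0]) auto
next
  case (Suc n)
  obtain \<Lambda> M L q where L: "\<forall>j<Suc n. linear_form (Suc n) (L j)" and cq: "cubic_form_on {1..<Suc n} q"
    and pq: "\<forall>x. p x = (\<Sum>j<Suc n. (L j x) ^ 3) + q (\<lambda>j. \<Sum>k<Suc n. \<Lambda> j k * x k)"
    using part1[of "Suc n" p] Suc.prems by auto
  obtain c' where c': "\<And>z. q z = cf {1..<Suc n} c' z" using cq unfolding cubic_form_on_def cf_def by blast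
  define q' where "q' = cf {..<n} (\<lambda>i j k. c' (Suc i) (Suc j) (Suc k))"
  have qq': "q z = q' (\<lambda>i. z (Suc i))" for z
  proof -
    have "{1..<Suc n} = Suc ` {..<n}" by (simp add: atLeast0LessThan[symmetric])
    then show ?thesis unfolding c' q'_def cf_def by (simp add: sum.reindex)
  qed
  have "cubic_form n q'" unfolding q'_def cubic_form_def cubic_form_on_def cf_def
    by (intro exI[of _ "\<lambda>i j k. c' (Suc i) (Suc j) (Suc k)"]) blast
  from Suc.IH[OF this] obtain m' L' where m': "m' \<le> (n + 1) choose 2" and L': "\<forall>i<m'. linear_form n (L' i)"
    and qL': "\<forall>x. q' x = (\<Sum>i<m'. (L' i x) ^ 3)" by blast
  define L2 where "L2 i = (if i < Suc n then L i else (\<lambda>x. L' (i - Suc n) (\<lambda>k. \<Sum>l<Suc n. \<Lambda> (Suc k) l * x l)))" for i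
  show ?case
  proof (intro exI[of _ "Suc n + m'"] exI[of _ L2] conjI allI impI)
    have "(Suc n + 1) choose 2 = Suc n + ((n + 1) choose 2)"
      using binomial_Suc_Suc[of "Suc n" 1] by (simp add: numeral_2_eq_2)
    then show "Suc n + m' \<le> (Suc n + 1) choose 2" using m' by simp
    fix i assume "i < Suc n + m'"
    then show "linear_form (Suc n) (L2 i)"
      using L L' linear_form_comp[of n "L' (i - Suc n)" "Suc n"] by (auto simp: L2_def)
  next
    fix x
    have "p x = (\<Sum>j<Suc n. (L j x) ^ 3) + (\<Sum>i<m'. (L' i (\<lambda>k. \<Sum>l<Suc n. \<Lambda> (Suc k) l * x l)) ^ 3)"
      using pq qq' qL' by simp
    also have "\<dots> = (\<Sum>i<Suc n + m'. (L2 i x) ^ 3)" unfolding sum_split_add by (simp add: L2_def)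
    finally show "p x = (\<Sum>i<Suc n + m'. (L2 i x) ^ 3)" .
  qed
qed


theorem theorem6p2:
  fixes n :: nat and p :: "(nat \<Rightarrow> complex) \<Rightarrow> complex"
  assumes "n \<ge> 1" and "cubic_form n p"
  shows "(\<exists>(\<Lambda> :: nat \<Rightarrow> nat \<Rightarrow> complex) (M :: nat \<Rightarrow> nat \<Rightarrow> complex).
            (\<forall>j<n. \<forall>i<n. (\<Sum>k<n. \<Lambda> j k * M k i) = (if j = i then 1 else 0)) \<and>
            (\<forall>j<n. \<forall>i<n. (\<Sum>k<n. M j k * \<Lambda> k i) = (if j = i then 1 else 0)) \<and>
            (\<exists>(L :: nat \<Rightarrow> (nat \<Rightarrow> complex) \<Rightarrow> complex) q.
               (\<forall>j<n. linear_form n (L j)) \<and> cubic_form_on {1..<n} q \<and>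
               (\<forall>x. p x = (\<Sum>j<n. (L j x) ^ 3) + q (\<lambda>j. \<Sum>k<n. \<Lambda> j k * x k))))
       \<and> (\<exists>m (L :: nat \<Rightarrow> (nat \<Rightarrow> complex) \<Rightarrow> complex).
            m \<le> (n + 1) choose 2 \<and> (\<forall>i<m. linear_form n (L i)) \<and>
            (\<forall>x. p x = (\<Sum>i<m. (L i x) ^ 3)))"
  using part1[OF assms] part2[OF assms(2)] by blast

end
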